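(* Tijdeman's Conjecture $(\bmod~900)$ is false. That is, there exist subsets $\bar{A},\bar{B}\subseteq \mathbb{Z}/900\mathbb{Z}$ with $\bar{0}\in\bar{A}\cap\bar{B}$ such that $\bar{A}\oplus\bar{B}=\mathbb{Z}/900\mathbb{Z}$ is a factorization, $\bar{A}$ has a lifting $A\subseteq\mathbb{Z}$ with $0\in A$ and $\gcd\{a : a\in A\}=1$, and $\bar{B}$ has a lifting $B\subseteq\mathbb{Z}$ with $0\in B$ and $\gcd\{b: b\in B\}=1$.
   Context: A factorization $\bar{A}\oplus\bar{B}=G$ of a finite cyclic group $G=\mathbb{Z}/m\mathbb{Z}$ means every $g\in G$ has a unique representation $g=\bar a+\bar b$ with $\bar a\in\bar A$, $\bar b\in\bar B$. A lifting of $\bar A$ is a set $A\subseteq\mathbb{Z}$ of integer representatives, one for each element of $\bar A$ (reduction mod $m$ is a bijection $A\to\bar A$). Tijdeman's Conjecture $(\bmod~m)$ asserts: if $\bar A\oplus\bar B=\mathbb{Z}/m\mathbb{Z}$ with $\bar 0\in\bar A\cap\bar B$ and $\bar A$ lifts to a set $A\subseteq\mathbb{Z}$ with $0\in A$ and $\gcd\{a:a\in A\}=1$, then every lifting $B\subseteq\mathbb{Z}$ of $\bar B$ with $0\in B$ has $\gcd\{b:b\in B\}\neq 1$. *)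

theory Defs
  imports Main
begin

text \<open>Elements of Z/mZ are represented by their canonical residues in {0..<m}.\<close>

definition residues_of :: "int \<Rightarrow> int set" where
  "residues_of m = {0..<m}"

definition is_factorization :: "int \<Rightarrow> int set \<Rightarrow> int set \<Rightarrow> bool" where
  "is_factorization m Abar Bbar \<longleftrightarrow>
     Abar \<subseteq> residues_of m \<and> Bbar \<subseteq> residues_of m \<and>
     (\<forall>g \<in> residues_of m. \<exists>!p. p \<in> Abar \<times> Bbar \<and> (fst p + snd p) mod m = g)"

definition is_lifting :: "int \<Rightarrow> int set \<Rightarrow> int set \<Rightarrow> bool" where
  "is_lifting m Abar A \<longleftrightarrow> bij_betw (\<lambda>x. x mod m) A Abar"

end

theory Submission
  imports Defs
begin

definition Al :: "int list" where
  "Al = [0, 36, 72, 100, 108, 136, 144, 172, 200, 208, 225, 236, 244, 261, 272, 297, 308, 325, 333, 344, 361, 369, 397, 425, 433, 461, 469, 497, 533, 569]"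

definition Bl :: "int list" where
  "Bl = [0, 30, 60, 75, 120, 126, 150, 210, 240, 280, 306, 330, 360, 390, 420, 486, 510, 525, 540, 570, 580, 600, 660, 666, 690, 720, 840, 846, 870, 880]"

definition fl :: "int list" where
  "fl = map (\<lambda>p. (fst p + snd p) mod 900) (List.product Al Bl)"

fun merge :: "int list \<Rightarrow> int list \<Rightarrow> int list" where
  "merge [] ys = ys"
| "merge xs [] = xs"
| "merge (x # xs) (y # ys) = (if x \<le> y then x # merge xs (y # ys) else y # merge (x # xs) ys)"

lemma set_merge: "set (merge xs ys) = set xs \<union> set ys"
  by (induction xs ys rule: merge.induct) auto

lemma length_merge: "length (merge xs ys) = length xs + length ys"
  by (induction xs ys rule: merge.induct) auto

fun halve :: "int list \<Rightarrow> int list \<times> int list" where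
  "halve [] = ([], [])"
| "halve [x] = ([x], [])"
| "halve (x # y # zs) = (case halve zs of (a, b) \<Rightarrow> (x # a, y # b))"

lemma halve_len: "length (fst (halve xs)) + length (snd (halve xs)) = length xs \<and>
   length (snd (halve xs)) \<le> length (fst (halve xs)) \<and> length (fst (halve xs)) \<le> Suc (length (snd (halve xs)))"
  by (induction xs rule: halve.induct) (auto split: prod.splits)

lemma halve_set: "set (fst (halve xs)) \<union> set (snd (halve xs)) = set xs"
  by (induction xs rule: halve.induct) (auto split: prod.splits)

lemma halve_less:
  assumes "halve xs = (a, b)" "2 \<le> length xs"
  shows "length a < length xs \<and> length b < length xs"
  using halve_len[of xs] assms by simp

function msort :: "int list \<Rightarrow> int list" where
  "msort [] = []"
| "msort [x] = [x]"
| "msort (x # y # zs) = (case halve (x # y # zs) of (a, b) \<Rightarrow> merge (msort a) (msort b))"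
  by pat_completeness auto
termination
proof (relation "measure length", goal_cases)
  case (2 x y zs a b)
  then show ?case using halve_less[of "x # y # zs" a b] by simp
next
  case (3 x y zs a b)
  then show ?case using halve_less[of "x # y # zs" a b] by simp
qed auto

lemma set_msort: "set (msort xs) = set xs \<and> length (msort xs) = length xs"
proof (induction xs rule: msort.induct)
  case (3 x y zs)
  obtain a b where ab: "halve (x # y # zs) = (a, b)" by (cases "halve (x # y # zs)")
  have "set a \<union> set b = set (x # y # zs)" "length a + length b = length (x # y # zs)"
    using halve_set[of "x # y # zs"] halve_len[of "x # y # zs"] ab by (simp_all del: halve.simps)
  then show ?case using 3 ab by (simp del: halve.simps add: set_merge length_merge)
qed auto

lemma sort_fl: "msort fl = [0..899]"
  unfolding fl_def Al_def Bl_def by code_simp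

lemma distAl: "distinct Al" unfolding Al_def by code_simp
lemma distBl: "distinct Bl" unfolding Bl_def by code_simp
lemma rngA: "list_all (\<lambda>x. 0 \<le> x \<and> x < 900) Al" unfolding Al_def by code_simp
lemma rngB: "list_all (\<lambda>x. 0 \<le> x \<and> x < 900) Bl" unfolding Bl_def by code_simp
lemma gcd3:
  fixes S :: "int set"
  assumes "a \<in> S" "b \<in> S" "c \<in> S" "a * x + b * y + c * z = 1"
  shows "Gcd S = 1"
proof -
  have "Gcd S dvd a * x + b * y + c * z"
    by (intro dvd_add dvd_mult2 Gcd_dvd assms(1-3))
  then have "is_unit (Gcd S)" using assms(4) by simp
  then have "normalize (Gcd S) = 1" by (rule is_unit_normalize)
  then show ?thesis by simp
qed

lemma gA: "Gcd (set Al) = 1"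
  by (rule gcd3[where a=225 and b=100 and c=36 and x=13 and y="-26" and z="-9"]) (simp_all add: Al_def)
lemma gB: "Gcd (set Bl) = 1"
  by (rule gcd3[where a=75 and b=280 and c=486 and x="-1455" and y=388 and z=1]) (simp_all add: Bl_def)

lemma dist_fl: "distinct fl"
proof -
  have "set fl = {0..899}"
    using set_msort[of fl] by (simp add: sort_fl)
  then have "card (set fl) = 900" by simp
  moreover have "length fl = 900"
    using set_msort[of fl] by (simp add: sort_fl)
  ultimately show ?thesis by (simp add: card_distinct)
qed

lemma set_fl: "set fl = {0..<900}"
proof -
  have "set fl = set (msort fl)" using set_msort by simp
  also have "\<dots> = {0..<900}" by (auto simp: sort_fl)
  finally show ?thesis .
qed

lemma inj_f: "inj_on (\<lambda>p. (fst p + snd p) mod 900) (set Al \<times> set Bl)"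
  using dist_fl unfolding fl_def
  by (simp add: distinct_map distinct_product distAl distBl)

lemma sub_res: "list_all (\<lambda>x. 0 \<le> x \<and> x < 900) xs \<Longrightarrow> set xs \<subseteq> residues_of 900"
  by (auto simp: residues_of_def list_all_iff)

lemma lift_id: "list_all (\<lambda>x. 0 \<le> x \<and> x < 900) xs \<Longrightarrow> is_lifting 900 (set xs) (set xs)"
  unfolding is_lifting_def bij_betw_def inj_on_def
  by (auto simp: list_all_iff image_def intro!: bexI)

lemma fact: "is_factorization 900 (set Al) (set Bl)"
  unfolding is_factorization_def
proof (intro conjI ballI)
  show "set Al \<subseteq> residues_of 900" by (rule sub_res[OF rngA])
  show "set Bl \<subseteq> residues_of 900" by (rule sub_res[OF rngB])
  fix g assume "g \<in> residues_of 900"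
  then have "g \<in> set fl" by (simp add: set_fl residues_of_def)
  then obtain p where p: "p \<in> set Al \<times> set Bl" "(fst p + snd p) mod 900 = g"
    unfolding fl_def by auto
  show "\<exists>!p. p \<in> set Al \<times> set Bl \<and> (fst p + snd p) mod 900 = g"
    using p inj_f unfolding inj_on_def by blast
qed

theorem theorem2p1:
  shows "\<exists>Abar Bbar :: int set.
           0 \<in> Abar \<and> 0 \<in> Bbar \<and> is_factorization 900 Abar Bbar \<and>
           (\<exists>A. is_lifting 900 Abar A \<and> 0 \<in> A \<and> Gcd A = 1) \<and>
           (\<exists>B. is_lifting 900 Bbar B \<and> 0 \<in> B \<and> Gcd B = 1)"
proof (intro exI conjI)
  show "0 \<in> set Al" by (simp add: Al_def)
  show "0 \<in> set Bl" by (simp add: Bl_def)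
  show "is_factorization 900 (set Al) (set Bl)" by (rule fact)
  show "is_lifting 900 (set Al) (set Al)" by (rule lift_id[OF rngA])
  show "0 \<in> set Al" by (simp add: Al_def)
  show "Gcd (set Al) = 1" by (rule gA)
  show "is_lifting 900 (set Bl) (set Bl)" by (rule lift_id[OF rngB])
  show "0 \<in> set Bl" by (simp add: Bl_def)
  show "Gcd (set Bl) = 1" by (rule gB)
qed

end
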